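(* Let $X$ be a locally convex Hausdorff space, $K\subset X$ a convex compact subset, $T:\mathscr{C}(K)\to\mathscr{C}(K)$ a Markov operator such that $T(h)=h$ for every $h\in A(K)$, $a\ge0$, and $(\mu_n)_{n\ge1}$ a sequence of Borel probability measures on $K$. Then for every $f\in\mathscr{C}(K)$, $C_n(f)\to f$ uniformly on $K$ as $n\to\infty$, where $C_n$ is defined in the context.
   Context: $\mathscr{C}(K)$ is the space of real continuous functions on $K$; $A(K)$ is the space of continuous affine functions on $K$. A Markov operator is a positive linear operator $T$ on $\mathscr{C}(K)$ with $T(\mathbf{1})=\mathbf{1}$; $(\tilde\mu_x^T)_{x\in K}$ are the Borel probability measures with $\int_K f\,d\tilde\mu_x^T=T(f)(x)$. For $n\ge1$, $$C_n(f)(x)=\int_K\cdots\int_K f\Big(\frac{x_1+\dots+x_n+a x_{n+1}}{n+a}\Big)\,d\tilde\mu_x^T(x_1)\cdots d\tilde\mu_x^T(x_n)\,d\mu_n(x_{n+1})\quad(f\in\mathscr{C}(K),x\in K).$$ *)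

theory Defs
  imports "HOL-Probability.Probability"
begin

text \<open>A (real) locally convex Hausdorff topological vector space structure on the type 'a:
  the Hausdorff property is the type class t2_space; vector operations are continuous
  and every point has a base of convex open neighbourhoods.\<close>
definition locally_convex_tvs :: "'a::{real_vector,t2_space} itself \<Rightarrow> bool" where
  "locally_convex_tvs (t::'a itself) \<longleftrightarrow>
     continuous_on UNIV (\<lambda>(x::'a, y). x + y) \<and>
     continuous_on UNIV (\<lambda>(c::real, x::'a). c *\<^sub>R x) \<and>
     (\<forall>(U::'a set) x. open U \<and> x \<in> U \<longrightarrow> (\<exists>V. open V \<and> convex V \<and> x \<in> V \<and> V \<subseteq> U))"

text \<open>Affine functions on a convex set K (elements of A(K) when also continuous on K).\<close>
definition affine_on :: "'a::real_vector set \<Rightarrow> ('a \<Rightarrow> real) \<Rightarrow> bool" where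
  "affine_on K h \<longleftrightarrow> (\<forall>x\<in>K. \<forall>y\<in>K. \<forall>t::real. 0 \<le> t \<and> t \<le> 1 \<longrightarrow>
      h ((1 - t) *\<^sub>R x + t *\<^sub>R y) = (1 - t) * h x + t * h y)"

text \<open>Markov operator on C(K): positive linear operator mapping C(K) into C(K) with T 1 = 1.
  Functions are represented on the whole type; only their values on K matter.\<close>
definition markov_operator :: "'a::topological_space set \<Rightarrow> (('a \<Rightarrow> real) \<Rightarrow> ('a \<Rightarrow> real)) \<Rightarrow> bool" where
  "markov_operator K T \<longleftrightarrow>
     (\<forall>f. continuous_on K f \<longrightarrow> continuous_on K (T f)) \<and>
     (\<forall>f g. continuous_on K f \<longrightarrow> continuous_on K g \<longrightarrow>
        (\<forall>x\<in>K. T (\<lambda>y. f y + g y) x = T f x + T g x)) \<and>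
     (\<forall>f c. continuous_on K f \<longrightarrow> (\<forall>x\<in>K. T (\<lambda>y. c * f y) x = c * T f x)) \<and>
     (\<forall>f. continuous_on K f \<longrightarrow> (\<forall>x\<in>K. 0 \<le> f x) \<longrightarrow> (\<forall>x\<in>K. 0 \<le> T f x)) \<and>
     (\<forall>x\<in>K. T (\<lambda>_. 1) x = 1)"

definition borel_prob_on :: "'a::topological_space set \<Rightarrow> 'a measure \<Rightarrow> bool" where
  "borel_prob_on K M \<longleftrightarrow> prob_space M \<and> sets M = sets (restrict_space borel K)"

text \<open>Iterated integral: iter_int k M g xs = \<integral>...\<integral> g (y_k # ... # y_1 # xs) dM(y_1)...dM(y_k),
  the innermost integral being over the variable added last.\<close>
fun iter_int :: "nat \<Rightarrow> 'a measure \<Rightarrow> ('a list \<Rightarrow> real) \<Rightarrow> 'a list \<Rightarrow> real" where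
  "iter_int 0 M g xs = g xs"
| "iter_int (Suc k) M g xs = (\<integral>y. iter_int k M g (y # xs) \<partial>M)"

definition C_op :: "('a \<Rightarrow> 'a measure) \<Rightarrow> (nat \<Rightarrow> 'a measure) \<Rightarrow> real \<Rightarrow> nat
    \<Rightarrow> ('a::real_vector \<Rightarrow> real) \<Rightarrow> 'a \<Rightarrow> real" where
  "C_op mu mus a n f x =
     (\<integral>z. iter_int n (mu x)
             (\<lambda>xs. f (inverse (real n + a) *\<^sub>R (sum_list xs + a *\<^sub>R z))) [] \<partial>(mus n))"

end

theory Submission
  imports Defs
begin

definition mink :: "'a::real_vector set \<Rightarrow> 'a \<Rightarrow> real" where
  "mink V v = Inf {t. 0 < t \<and> inverse t *\<^sub>R v \<in> V}"

locale mink_set =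
  fixes V :: "'a::real_vector set"
  assumes cvx: "convex V" and zero: "0 \<in> V"
    and absorb: "\<And>v. \<exists>t>0. inverse t *\<^sub>R v \<in> V"
begin

lemma ne: "{t. 0 < t \<and> inverse t *\<^sub>R v \<in> V} \<noteq> {}"
  using absorb[of v] by auto

lemma bdd: "bdd_below {t. 0 < t \<and> inverse t *\<^sub>R v \<in> V}"
  by (rule bdd_belowI[where m=0]) auto

lemma nonneg: "0 \<le> mink V v"
  unfolding mink_def using ne by (intro cInf_greatest) auto

lemma le1: "v \<in> V \<Longrightarrow> mink V v \<le> 1"
  unfolding mink_def using bdd by (intro cInf_lower) auto

lemma lt1: assumes "mink V v < 1" shows "v \<in> V"
proof -
  from assms obtain t where t: "0 < t" "inverse t *\<^sub>R v \<in> V" "t < 1"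
    unfolding mink_def using cInf_less_iff[OF ne bdd] by auto
  have "t *\<^sub>R (inverse t *\<^sub>R v) + (1 - t) *\<^sub>R 0 \<in> V"
    using cvx t zero unfolding convex_def by (intro convexD[OF cvx]) auto
  then show ?thesis using t by simp
qed

lemma add: "mink V (v + w) \<le> mink V v + mink V w"
proof -
  have key: "mink V (v + w) \<le> s + t" if s: "0 < s" "inverse s *\<^sub>R v \<in> V"
    and t: "0 < t" "inverse t *\<^sub>R w \<in> V" for s t
  proof -
    have "(s / (s + t)) *\<^sub>R (inverse s *\<^sub>R v) + (t / (s + t)) *\<^sub>R (inverse t *\<^sub>R w) \<in> V"
    proof (rule convexD[OF cvx])
      show "s / (s + t) + t / (s + t) = 1" using s t by (simp add: add_divide_distrib[symmetric])
    qed (use s t in auto)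
    also have "(s / (s + t)) *\<^sub>R (inverse s *\<^sub>R v) + (t / (s + t)) *\<^sub>R (inverse t *\<^sub>R w)
        = inverse (s + t) *\<^sub>R (v + w)"
    proof -
      have st: "s + t \<noteq> 0" using s t by simp
      have "(s / (s + t)) *\<^sub>R (inverse s *\<^sub>R v) = inverse (s + t) *\<^sub>R v"
        using s st by (simp add: field_simps)
      moreover have "(t / (s + t)) *\<^sub>R (inverse t *\<^sub>R w) = inverse (s + t) *\<^sub>R w"
        using t st by (simp add: field_simps)
      ultimately show ?thesis by (simp only: scaleR_add_right)
    qed
    finally show ?thesis unfolding mink_def using s t bdd by (intro cInf_lower) auto
  qed
  have "mink V (v + w) - t \<le> mink V v" if t: "0 < t" "inverse t *\<^sub>R w \<in> V" for t
    unfolding mink_def[of V v] using key t ne by (intro cInf_greatest) force+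
  then have "mink V (v + w) - mink V v \<le> mink V w"
    unfolding mink_def[of V w] using ne by (intro cInf_greatest) force+
  then show ?thesis by simp
qed

lemma scale_le: assumes c: "0 < c" shows "mink V (c *\<^sub>R v) \<le> c * mink V v"
proof -
  have "mink V (c *\<^sub>R v) / c \<le> t" if t: "0 < t" "inverse t *\<^sub>R v \<in> V" for t
  proof -
    have "inverse (c * t) *\<^sub>R (c *\<^sub>R v) = inverse t *\<^sub>R v" using c by simp
    then have "c * t \<in> {t. 0 < t \<and> inverse t *\<^sub>R (c *\<^sub>R v) \<in> V}" using t c by (simp del: scaleR_scaleR)
    then have "mink V (c *\<^sub>R v) \<le> c * t" unfolding mink_def
      by (rule cInf_lower[OF _ bdd])
    then show ?thesis using c by (simp add: field_simps)
  qed
  then have "mink V (c *\<^sub>R v) / c \<le> mink V v"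
    unfolding mink_def[of V v] using ne by (intro cInf_greatest) force+
  then show ?thesis using c by (simp add: field_simps)
qed

lemma scale: assumes c: "0 < c" shows "mink V (c *\<^sub>R v) = c * mink V v"
proof -
  have "mink V v = mink V (inverse c *\<^sub>R (c *\<^sub>R v))" using c by simp
  also have "\<dots> \<le> inverse c * mink V (c *\<^sub>R v)" using c by (intro scale_le) auto
  finally have "c * mink V v \<le> mink V (c *\<^sub>R v)" using c by (simp add: field_simps)
  then show ?thesis using scale_le[OF c, of v] by simp
qed

end

lemma hahn_banach_1d:
  fixes p :: "'a::real_vector \<Rightarrow> real" and d :: 'a
  assumes padd: "\<And>x y. p (x + y) \<le> p x + p y"
    and pscale: "\<And>c x. 0 < c \<Longrightarrow> p (c *\<^sub>R x) = c * p x"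
    and pnn: "\<And>x. 0 \<le> p x"
    and d: "d \<noteq> 0"
  shows "\<exists>l. linear l \<and> (\<forall>v. l v \<le> p v) \<and> l d = p d"
proof -
  define B where "B = {(t *\<^sub>R d, t * p d) | t. True}"
  define A where "A = {G :: ('a \<times> real) set. (0,0) \<in> G
      \<and> (\<forall>x r y s. (x,r) \<in> G \<longrightarrow> (y,s) \<in> G \<longrightarrow> (x+y, r+s) \<in> G)
      \<and> (\<forall>x r c. (x,r) \<in> G \<longrightarrow> (c *\<^sub>R x, c*r) \<in> G)
      \<and> (\<forall>x r s. (x,r) \<in> G \<longrightarrow> (x,s) \<in> G \<longrightarrow> r = s)
      \<and> (\<forall>x r. (x,r) \<in> G \<longrightarrow> r \<le> p x) \<and> B \<subseteq> G}"
  have p0: "p 0 = 0" using pscale[of 2 0] by simp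
  have BA: "B \<in> A"
  proof -
    have sv: "r = s" if "t1 *\<^sub>R d = t2 *\<^sub>R d" "r = t1 * p d" "s = t2 * p d" for t1 t2 r s
      using that d by (auto simp: scaleR_cancel_right)
    have dom: "t * p d \<le> p (t *\<^sub>R d)" for t
    proof (cases "t > 0")
      case True then show ?thesis using pscale by simp
    next
      case False
      then have "t * p d \<le> 0" using pnn[of d] by (simp add: mult_nonpos_nonneg)
      then show ?thesis using pnn[of "t *\<^sub>R d"] by linarith
    qed
    show ?thesis unfolding A_def B_def
      apply (intro CollectI conjI allI impI)
      subgoal by (auto intro: exI[of _ 0])
      subgoal for x r y s apply clarsimp subgoal for t1 t2 apply (rule exI[of _ "t1 + t2"]) by (simp add: scaleR_add_left distrib_right) done
      subgoal for x r c apply clarsimp subgoal for t apply (rule exI[of _ "c * t"]) by simp done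
      subgoal using sv by blast
      subgoal using dom by blast
      subgoal by simp
      done
  qed
  have "\<exists>M\<in>A. \<forall>X\<in>A. M \<subseteq> X \<longrightarrow> X = M"
  proof (rule subset_Zorn)
    fix C assume C: "subset.chain A C"
    show "\<exists>U\<in>A. \<forall>X\<in>C. X \<subseteq> U"
    proof (cases "C = {}")
      case True then show ?thesis using BA by auto
    next
      case False
      have CA: "C \<subseteq> A" and cmp: "\<And>X Y. X \<in> C \<Longrightarrow> Y \<in> C \<Longrightarrow> X \<subseteq> Y \<or> Y \<subseteq> X"
        using C by (auto simp: subset_chain_def)
      have two: "\<exists>G\<in>C. a \<in> G \<and> b \<in> G" if "a \<in> \<Union>C" "b \<in> \<Union>C" for a b
      proof -
        from that obtain G1 G2 where "G1 \<in> C" "G2 \<in> C" "a \<in> G1" "b \<in> G2" by blast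
        with cmp[of G1 G2] show ?thesis by blast
      qed
      have "\<Union>C \<in> A"
        unfolding A_def
      proof (intro CollectI conjI allI impI)
        show "(0,0) \<in> \<Union>C" using False CA by (auto simp: A_def)
        show "B \<subseteq> \<Union>C"
        proof -
          obtain X where X: "X \<in> C" using False by blast
          then have "B \<subseteq> X" using CA by (auto simp: A_def)
          then show ?thesis using X by blast
        qed
        fix x r y s assume "(x,r) \<in> \<Union>C" "(y,s) \<in> \<Union>C"
        then obtain G where G: "G \<in> C" "(x,r) \<in> G" "(y,s) \<in> G" using two by blast
        then have "G \<in> A" using CA by blast
        then have "(x+y, r+s) \<in> G" using G unfolding A_def by blast
        then show "(x+y, r+s) \<in> \<Union>C" using G by blast
      next
        fix x r c assume "(x,r) \<in> \<Union>C"
        then obtain G where G: "G \<in> C" "(x,r) \<in> G" by blast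
        then have "G \<in> A" using CA by blast
        then have "(c *\<^sub>R x, c*r) \<in> G" using G unfolding A_def by blast
        then show "(c *\<^sub>R x, c*r) \<in> \<Union>C" using G by blast
      next
        fix x r s assume "(x,r) \<in> \<Union>C" "(x,s) \<in> \<Union>C"
        then obtain G where G: "G \<in> C" "(x,r) \<in> G" "(x,s) \<in> G" using two by blast
        then have "G \<in> A" using CA by blast
        then show "r = s" using G unfolding A_def by blast
      next
        fix x r assume "(x,r) \<in> \<Union>C"
        then obtain G where G: "G \<in> C" "(x,r) \<in> G" by blast
        then have "G \<in> A" using CA by blast
        then show "r \<le> p x" using G unfolding A_def by blast
      qed
      then show ?thesis by blast
    qed
  qed
  then obtain G where GA: "G \<in> A" and Gmax: "\<And>X. X \<in> A \<Longrightarrow> G \<subseteq> X \<Longrightarrow> X = G" by blast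
  have G0: "(0,0) \<in> G"
    and Gadd: "\<And>x r y s. (x,r) \<in> G \<Longrightarrow> (y,s) \<in> G \<Longrightarrow> (x+y, r+s) \<in> G"
    and Gsc: "\<And>x r c. (x,r) \<in> G \<Longrightarrow> (c *\<^sub>R x, c*r) \<in> G"
    and Gsv: "\<And>x r s. (x,r) \<in> G \<Longrightarrow> (x,s) \<in> G \<Longrightarrow> r = s"
    and Gdom: "\<And>x r. (x,r) \<in> G \<Longrightarrow> r \<le> p x"
    and GB: "B \<subseteq> G"
    using GA unfolding A_def by blast+
  have total: "\<exists>r. (z,r) \<in> G" for z
  proof (rule ccontr)
    assume nz: "\<not> (\<exists>r. (z,r) \<in> G)"
    have key: "s - p (y - z) \<le> p (x + z) - r" if "(x,r) \<in> G" "(y,s) \<in> G" for x r y s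
    proof -
      have "r + s \<le> p (x + y)" using Gadd Gdom that by blast
      also have "x + y = (x + z) + (y - z)" by simp
      also have "p \<dots> \<le> p (x + z) + p (y - z)" by (rule padd)
      finally show ?thesis by simp
    qed
    define S where "S = {s - p (y - z) | y s. (y,s) \<in> G}"
    define c0 where "c0 = Sup S"
    have Sne: "S \<noteq> {}" using G0 unfolding S_def by blast
    have Sbdd: "bdd_above S" unfolding S_def
      using key[OF G0] by (intro bdd_aboveI[where M="p (0 + z) - 0"]) auto
    have c0up: "s - p (y - z) \<le> c0" if "(y,s) \<in> G" for y s
      unfolding c0_def using that Sbdd by (intro cSup_upper) (auto simp: S_def)
    have c0low: "c0 \<le> p (x + z) - r" if "(x,r) \<in> G" for x r
      unfolding c0_def using Sne key[OF that] by (intro cSup_least) (auto simp: S_def)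
    define G' where "G' = {(x + t *\<^sub>R z, r + t * c0) | x r t. (x,r) \<in> G}"
    have GG': "G \<subseteq> G'" unfolding G'_def by (force intro: exI[of _ 0])
    have zc: "(z, c0) \<in> G'" unfolding G'_def using G0 by (force intro: exI[of _ 1])
    have "G' \<in> A" unfolding A_def
    proof (intro CollectI conjI allI impI)
      show "(0,0) \<in> G'" using GG' G0 by auto
      show "B \<subseteq> G'" using GB GG' by auto
    next
      fix x r y s assume "(x,r) \<in> G'" "(y,s) \<in> G'"
      then obtain x1 r1 t1 x2 r2 t2 where "(x1,r1) \<in> G" "(x2,r2) \<in> G"
        "x = x1 + t1 *\<^sub>R z" "r = r1 + t1 * c0" "y = x2 + t2 *\<^sub>R z" "s = r2 + t2 * c0"
        unfolding G'_def by blast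
      then have m: "(x1+x2, r1+r2) \<in> G" and e: "(x+y, r+s) = ((x1+x2) + (t1+t2) *\<^sub>R z, (r1+r2) + (t1+t2)*c0)"
        using Gadd by (auto simp: algebra_simps)
      show "(x+y, r+s) \<in> G'" unfolding G'_def e using m by blast
    next
      fix x r c assume "(x,r) \<in> G'"
      then obtain x1 r1 t1 where "(x1,r1) \<in> G" "x = x1 + t1 *\<^sub>R z" "r = r1 + t1 * c0"
        unfolding G'_def by blast
      then have m: "(c *\<^sub>R x1, c*r1) \<in> G" and e: "(c *\<^sub>R x, c*r) = (c *\<^sub>R x1 + (c*t1) *\<^sub>R z, c*r1 + (c*t1)*c0)"
        using Gsc[of x1 r1 c] by (auto simp: algebra_simps)
      show "(c *\<^sub>R x, c*r) \<in> G'" unfolding G'_def e using m by blast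
    next
      fix x r s assume "(x,r) \<in> G'" "(x,s) \<in> G'"
      then obtain x1 r1 t1 x2 r2 t2 where g: "(x1,r1) \<in> G" "(x2,r2) \<in> G"
        "x = x1 + t1 *\<^sub>R z" "r = r1 + t1 * c0" "x = x2 + t2 *\<^sub>R z" "s = r2 + t2 * c0"
        unfolding G'_def by blast
      have "t1 = t2"
      proof (rule ccontr)
        assume ne: "t1 \<noteq> t2"
        have "(x1 + (-1) *\<^sub>R x2, r1 + (-1) * r2) \<in> G" using g Gadd Gsc by blast
        then have "(inverse (t2 - t1) *\<^sub>R (x1 + (-1) *\<^sub>R x2), inverse (t2 - t1) * (r1 + (-1) * r2)) \<in> G"
          using Gsc by blast
        moreover have "inverse (t2 - t1) *\<^sub>R (x1 + (-1) *\<^sub>R x2) = z"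
        proof -
          have "x1 - x2 = (t2 - t1) *\<^sub>R z" using g by (simp add: algebra_simps)
          then show ?thesis using ne by simp
        qed
        ultimately show False using nz by auto
      qed
      then have "x1 = x2" using g by simp
      then show "r = s" using g \<open>t1 = t2\<close> Gsv by auto
    next
      fix x r assume "(x,r) \<in> G'"
      then obtain x1 r1 t where g: "(x1,r1) \<in> G" "x = x1 + t *\<^sub>R z" "r = r1 + t * c0"
        unfolding G'_def by blast
      show "r \<le> p x"
      proof (cases "t = 0")
        case True then show ?thesis using g Gdom by simp
      next
        case False
        show ?thesis
        proof (cases "t > 0")
          case True
          have "(inverse t *\<^sub>R x1, inverse t * r1) \<in> G" using Gsc g by blast
          then have "c0 \<le> p (inverse t *\<^sub>R x1 + z) - inverse t * r1" by (rule c0low)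
          then have "t * c0 \<le> t * p (inverse t *\<^sub>R x1 + z) - r1"
            using True by (simp add: field_simps)
          also have "t * p (inverse t *\<^sub>R x1 + z) = p (t *\<^sub>R (inverse t *\<^sub>R x1 + z))"
            using pscale True by simp
          also have "t *\<^sub>R (inverse t *\<^sub>R x1 + z) = x" using g True by (simp add: scaleR_add_right)
          finally show ?thesis using g by simp
        next
          case False2: False
          define u where "u = - t"
          have u: "u > 0" using False False2 unfolding u_def by simp
          have "(inverse u *\<^sub>R x1, inverse u * r1) \<in> G" using Gsc g by blast
          then have "inverse u * r1 - p (inverse u *\<^sub>R x1 - z) \<le> c0" by (rule c0up)
          then have "r1 - u * p (inverse u *\<^sub>R x1 - z) \<le> u * c0"
            using u by (simp add: field_simps)
          also have "u * p (inverse u *\<^sub>R x1 - z) = p (u *\<^sub>R (inverse u *\<^sub>R x1 - z))"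
            using pscale u by simp
          also have "u *\<^sub>R (inverse u *\<^sub>R x1 - z) = x" using g u unfolding u_def
            by (simp add: scaleR_diff_right)
          finally show ?thesis using g unfolding u_def by simp
        qed
      qed
    qed
    then have "G' = G" using Gmax GG' by blast
    then show False using zc nz by auto
  qed
  define l where "l v = (THE r. (v,r) \<in> G)" for v
  have lG: "(v, l v) \<in> G" for v
  proof -
    obtain r where r: "(v,r) \<in> G" using total by blast
    have "l v = r" unfolding l_def using r Gsv by (intro the_equality) auto
    then show ?thesis using r by simp
  qed
  have luniq: "(v, r) \<in> G \<Longrightarrow> l v = r" for v r using lG Gsv by blast
  have "linear l"
  proof (rule linearI)
    show "l (x + y) = l x + l y" for x y using luniq Gadd lG by blast
    show "l (c *\<^sub>R x) = c *\<^sub>R l x" for c x using luniq Gsc lG by simp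
  qed
  moreover have "\<forall>v. l v \<le> p v" using lG Gdom by blast
  moreover have "l d = p d"
  proof -
    have "(1 *\<^sub>R d, 1 * p d) \<in> G" using GB unfolding B_def by blast
    then show ?thesis using luniq by simp
  qed
  ultimately show ?thesis by blast
qed

lemma lc_add:
  fixes f g :: "'b::topological_space \<Rightarrow> 'a::{real_vector,t2_space}"
  assumes LC: "locally_convex_tvs TYPE('a)"
    and f: "continuous_on S f" and g: "continuous_on S g"
  shows "continuous_on S (\<lambda>p. f p + g p)"
proof -
  have a: "continuous_on UNIV (\<lambda>(x::'a, y). x + y)" using LC unfolding locally_convex_tvs_def by blast
  have "continuous_on S (\<lambda>p. (\<lambda>(x::'a, y). x + y) (f p, g p))"
    by (rule continuous_on_compose2[OF a]) (auto intro: continuous_on_Pair f g)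
  then show ?thesis by simp
qed

lemma lc_scaleR:
  fixes f :: "'b::topological_space \<Rightarrow> real" and g :: "'b \<Rightarrow> 'a::{real_vector,t2_space}"
  assumes LC: "locally_convex_tvs TYPE('a)"
    and f: "continuous_on S f" and g: "continuous_on S g"
  shows "continuous_on S (\<lambda>p. f p *\<^sub>R g p)"
proof -
  have a: "continuous_on UNIV (\<lambda>(c::real, x::'a). c *\<^sub>R x)" using LC unfolding locally_convex_tvs_def by blast
  have "continuous_on S (\<lambda>p. (\<lambda>(c::real, x::'a). c *\<^sub>R x) (f p, g p))"
    by (rule continuous_on_compose2[OF a]) (auto intro: continuous_on_Pair f g)
  then show ?thesis by simp
qed

lemma separate:
  fixes x y :: "'a::{real_vector,t2_space}"
  assumes LC: "locally_convex_tvs TYPE('a)" and xy: "x \<noteq> y"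
  shows "\<exists>l::'a \<Rightarrow> real. linear l \<and> continuous_on UNIV l \<and> l x \<noteq> l y"
proof -
  define d where "d = x - y"
  have d: "d \<noteq> 0" using xy unfolding d_def by simp
  obtain U U' where U: "open U" "open U'" "(0::'a) \<in> U" "d \<in> U'" "U \<inter> U' = {}"
    using hausdorff[OF d[symmetric]] by blast
  obtain V where V: "open V" "convex V" "(0::'a) \<in> V" "V \<subseteq> U"
    using LC U unfolding locally_convex_tvs_def by blast
  have dV: "d \<notin> V" using U V by blast
  have absorb: "\<exists>t>0. inverse t *\<^sub>R v \<in> V" for v
  proof -
    have c: "continuous_on UNIV (\<lambda>t::real. t *\<^sub>R v)"
      by (rule lc_scaleR[OF LC]) (auto intro: continuous_on_id continuous_on_const)
    have "open ((\<lambda>t::real. t *\<^sub>R v) -` V)" by (rule open_vimage[OF V(1) c])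
    moreover have "(0::real) \<in> (\<lambda>t::real. t *\<^sub>R v) -` V" using V by simp
    ultimately obtain e where e: "e > 0" "ball 0 e \<subseteq> (\<lambda>t::real. t *\<^sub>R v) -` V"
      using openE by blast
    have "(e/2) \<in> ball 0 e" using e by simp
    then have "(e/2) *\<^sub>R v \<in> V" using e by blast
    then show ?thesis using e by (intro exI[of _ "inverse (e/2)"]) auto
  qed
  interpret mink_set V using V absorb by unfold_locales auto
  obtain l where l: "linear l" "\<And>v. l v \<le> mink V v" "l d = mink V d"
    using hahn_banach_1d[of "mink V" d] add scale nonneg d by blast
  have "1 \<le> mink V d" using lt1 dV by force
  then have "l x - l y \<ge> 1" using l linear_diff[OF l(1), of x y] unfolding d_def by simp
  then have lxy: "l x \<noteq> l y" by auto
  define W where "W = V \<inter> (\<lambda>v. (-1::real) *\<^sub>R v) -` V"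
  have Wo: "open W"
  proof -
    have "continuous_on UNIV (\<lambda>v::'a. (-1::real) *\<^sub>R v)"
      by (rule lc_scaleR[OF LC]) (auto intro: continuous_on_id continuous_on_const)
    then show ?thesis unfolding W_def using V by (intro open_Int open_vimage) auto
  qed
  have W0: "0 \<in> W" using V unfolding W_def by simp
  have Wb: "\<bar>l w\<bar> \<le> 1" if "w \<in> W" for w
  proof -
    have "l w \<le> 1" using l(2)[of w] le1[of w] that unfolding W_def by auto
    moreover have "(-1::real) *\<^sub>R w \<in> V" using that unfolding W_def by blast
    then have "l ((-1::real) *\<^sub>R w) \<le> 1" using l(2)[of "(-1::real) *\<^sub>R w"] le1 by fastforce
    then have "- l w \<le> 1" using linear_cmul[OF l(1), of "-1" w] by simp
    ultimately show ?thesis by simp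
  qed
  have "continuous_on UNIV l"
    unfolding continuous_on_def
  proof (intro ballI tendstoI)
    fix v0 :: 'a and e :: real assume e: "e > 0"
    define S where "S = (\<lambda>v. inverse (e/2) *\<^sub>R (v + (- v0))) -` W"
    have "continuous_on UNIV (\<lambda>v. inverse (e/2) *\<^sub>R (v + (- v0)))"
      by (intro lc_scaleR[OF LC] lc_add[OF LC] continuous_on_const continuous_on_id)
    then have So: "open S" unfolding S_def using Wo by (rule open_vimage[rotated])
    have S0: "v0 \<in> S" unfolding S_def using W0 by simp
    have "dist (l v) (l v0) < e" if "v \<in> S" for v
    proof -
      have "\<bar>l (inverse (e/2) *\<^sub>R (v + (- v0)))\<bar> \<le> 1" using Wb that unfolding S_def by blast
      also have "l (inverse (e/2) *\<^sub>R (v + (- v0))) = inverse (e/2) * (l v - l v0)"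
        using linear_cmul[OF l(1)] linear_diff[OF l(1)] by simp
      finally have "\<bar>inverse (e/2)\<bar> * \<bar>l v - l v0\<bar> \<le> 1" by (simp only: abs_mult)
      then have "\<bar>l v - l v0\<bar> \<le> e/2" using e by (simp add: field_simps)
      then show ?thesis using e by (simp add: dist_real_def)
    qed
    then show "\<forall>\<^sub>F v in at v0 within UNIV. dist (l v) (l v0) < e"
      unfolding eventually_at_topological using So S0 by blast
  qed
  then show ?thesis using l(1) lxy by blast
qed

lemma space_restr:
  assumes "sets M = sets (restrict_space borel K)"
  shows "space M = K"
  using sets_eq_imp_space_eq[OF assms] by (simp add: space_restrict_space)

lemma integrable_cont:
  fixes g :: "'a::topological_space \<Rightarrow> real"
  assumes P: "prob_space M" and S: "sets M = sets (restrict_space borel K)"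
    and K: "compact K" and g: "continuous_on K g"
  shows "integrable M g"
proof -
  interpret prob_space M by (rule P)
  have sp: "space M = K" by (rule space_restr[OF S])
  have m: "g \<in> borel_measurable M"
  proof -
    have "borel_measurable M = borel_measurable (restrict_space borel K)"
      by (rule measurable_cong_sets[OF S refl])
    then show ?thesis using borel_measurable_continuous_on_restrict[OF g] by blast
  qed
  have "compact (g ` K)" by (rule compact_continuous_image[OF g K])
  then obtain B where B: "\<forall>x\<in>g ` K. norm x \<le> B" using compact_imp_bounded bounded_iff by metis
  show ?thesis
    by (rule integrable_const_bound[where B=B]) (use B sp m in auto)
qed

lemma cont_param_integral:
  fixes H :: "'c::topological_space \<times> 'a::topological_space \<Rightarrow> real"
  assumes P: "prob_space M" and Ssets: "sets M = sets (restrict_space borel K)"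
    and K: "compact K" and H: "continuous_on (S \<times> K) H"
  shows "continuous_on S (\<lambda>s. \<integral>y. H (s,y) \<partial>M)"
  unfolding continuous_on_def
proof (intro ballI tendstoI)
  interpret prob_space M by (rule P)
  have sp: "space M = K" by (rule space_restr[OF Ssets])
  fix s0 e assume s0: "s0 \<in> S" and e: "(0::real) < e"
  have loc: "\<exists>A B. open A \<and> open B \<and> s0 \<in> A \<and> y \<in> B \<and>
      (\<forall>q\<in>A \<times> B. q \<in> S \<times> K \<longrightarrow> dist (H q) (H (s0,y)) < e/4)" if y: "y \<in> K" for y
  proof -
    have "(H \<longlongrightarrow> H (s0,y)) (at (s0,y) within S \<times> K)"
      using H s0 y unfolding continuous_on_def by auto
    then have "\<forall>\<^sub>F q in at (s0,y) within S \<times> K. dist (H q) (H (s0,y)) < e/4"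
      using e by (intro tendstoD) auto
    then obtain Ob where Ob: "open Ob" "(s0,y) \<in> Ob"
      "\<forall>q\<in>Ob. q \<in> S \<times> K \<longrightarrow> q \<noteq> (s0,y) \<longrightarrow> dist (H q) (H (s0,y)) < e/4"
      unfolding eventually_at_topological by blast
    obtain A B where AB: "open A" "open B" "(s0,y) \<in> A \<times> B" "A \<times> B \<subseteq> Ob"
      using open_prod_elim[OF Ob(1,2)] by blast
    show ?thesis using AB Ob e by (intro exI[of _ A] exI[of _ B]) force
  qed
  then obtain A B where AB: "\<And>y. y \<in> K \<Longrightarrow> open (A y) \<and> open (B y) \<and> s0 \<in> A y \<and> y \<in> B y \<and>
      (\<forall>q\<in>A y \<times> B y. q \<in> S \<times> K \<longrightarrow> dist (H q) (H (s0,y)) < e/4)"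
    by metis
  have "\<And>y. y \<in> K \<Longrightarrow> open (B y)" "K \<subseteq> (\<Union>y\<in>K. B y)" using AB by auto
  then obtain K' where K': "K' \<subseteq> K" "finite K'" "K \<subseteq> (\<Union>y\<in>K'. B y)"
    using compactE_image[OF K] by metis
  define U where "U = (\<Inter>y\<in>K'. A y)"
  have Uo: "open U" unfolding U_def using K' AB by (intro open_INT) auto
  have U0: "s0 \<in> U" unfolding U_def using K' AB by auto
  have pt: "\<bar>H (s,y') - H (s0,y')\<bar> \<le> e/2" if s: "s \<in> U" "s \<in> S" and y': "y' \<in> K" for s y'
  proof -
    obtain y where y: "y \<in> K'" "y' \<in> B y" using K' y' by blast
    have yK: "y \<in> K" using y K' by auto
    have "s \<in> A y" using s y unfolding U_def by auto
    then have "dist (H (s,y')) (H (s0,y)) < e/4" using AB[OF yK] y s y' by auto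
    moreover have "dist (H (s0,y')) (H (s0,y)) < e/4" using AB[OF yK] y s0 y' by auto
    ultimately show ?thesis unfolding dist_real_def by linarith
  qed
  have intg: "integrable M (\<lambda>y. H (s,y))" if "s \<in> S" for s
  proof (rule integrable_cont[OF P Ssets K])
    show "continuous_on K (\<lambda>y. H (s, y))"
      by (rule continuous_on_compose2[OF H]) (auto intro: continuous_on_Pair continuous_on_const continuous_on_id that)
  qed
  have "dist (\<integral>y. H (s,y) \<partial>M) (\<integral>y. H (s0,y) \<partial>M) < e" if s: "s \<in> U" "s \<in> S" for s
  proof -
    have "\<bar>(\<integral>y. H (s,y) \<partial>M) - (\<integral>y. H (s0,y) \<partial>M)\<bar> = \<bar>\<integral>y. H (s,y) - H (s0,y) \<partial>M\<bar>"
      using intg s s0 by (simp add: Bochner_Integration.integral_diff)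
    also have "\<dots> \<le> (\<integral>y. \<bar>H (s,y) - H (s0,y)\<bar> \<partial>M)"
      using integral_norm_bound[of M "\<lambda>y. H (s,y) - H (s0,y)"] by simp
    also have "\<dots> \<le> (\<integral>y. e/2 \<partial>M)"
      using intg s s0 pt sp by (intro integral_mono) auto
    also have "\<dots> = e/2" using prob_space by simp
    finally show ?thesis using e by (simp add: dist_real_def)
  qed
  then show "\<forall>\<^sub>F s in at s0 within S. dist (\<integral>y. H (s,y) \<partial>M) (\<integral>y. H (s0,y) \<partial>M) < e"
    unfolding eventually_at_topological using Uo U0 by blast
qed

fun J :: "'a measure \<Rightarrow> nat \<Rightarrow> ('a \<Rightarrow> real) \<Rightarrow> 'a::real_vector \<Rightarrow> real" where
  "J M 0 G s = G s"
| "J M (Suc k) G s = (\<integral>y. J M k G (y + s) \<partial>M)"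

lemma iter_int_J:
  "iter_int k M (\<lambda>xs. G (sum_list xs + w)) xs = J M k G (sum_list xs + w)"
  by (induction k arbitrary: xs) (simp_all add: add.assoc)

definition SS :: "'a::real_vector set \<Rightarrow> real \<Rightarrow> nat \<Rightarrow> 'a set" where
  "SS K a j = {sum_list ys + a *\<^sub>R z | ys z. length ys = j \<and> set ys \<subseteq> K \<and> z \<in> K}"

lemma SS_step: assumes y: "y \<in> K" and s: "s \<in> SS K a j" shows "y + s \<in> SS K a (Suc j)"
proof -
  obtain ys z where e: "s = sum_list ys + a *\<^sub>R z" "length ys = j" "set ys \<subseteq> K" "z \<in> K"
    using s unfolding SS_def by blast
  show ?thesis unfolding SS_def mem_Collect_eq
    by (rule exI[of _ "y # ys"], rule exI[of _ z]) (use e y in \<open>simp add: add.assoc\<close>)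
qed

lemma SS0: "z \<in> K \<Longrightarrow> a *\<^sub>R z \<in> SS K a 0"
  unfolding SS_def by force

lemma avg_in:
  assumes K: "convex K" shows "set ys \<subseteq> K \<Longrightarrow> ys \<noteq> [] \<Longrightarrow> inverse (real (length ys)) *\<^sub>R sum_list ys \<in> K"
proof (induction ys)
  case Nil then show ?case by simp
next
  case (Cons y ys)
  show ?case
  proof (cases "ys = []")
    case True then show ?thesis using Cons by simp
  next
    case False
    define k where "k = real (length ys)"
    have k: "k \<ge> 1" using False unfolding k_def by (cases ys) auto
    have m: "inverse k *\<^sub>R sum_list ys \<in> K" using Cons False unfolding k_def by auto
    have "(1 / (k+1)) *\<^sub>R y + (k / (k+1)) *\<^sub>R (inverse k *\<^sub>R sum_list ys) \<in> K"
      using Cons.prems m k by (intro convexD[OF K]) (auto simp: add_divide_distrib[symmetric])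
    also have "(1 / (k+1)) *\<^sub>R y + (k / (k+1)) *\<^sub>R (inverse k *\<^sub>R sum_list ys)
        = inverse (real (length (y # ys))) *\<^sub>R sum_list (y # ys)"
    proof -
      have c1: "(k / (k+1)) * inverse k = inverse (k+1)" using k by (simp add: field_simps)
      have c2: "inverse (real (length (y # ys))) = inverse (k+1)" unfolding k_def by simp
      show ?thesis unfolding c2 scaleR_scaleR c1 by (simp add: scaleR_add_right divide_inverse)
    qed
    finally show ?thesis .
  qed
qed

lemma comb_in:
  assumes K: "convex K" and ys: "set ys \<subseteq> K" "length ys = n" and n: "n \<ge> 1"
    and z: "z \<in> K" and a: "a \<ge> 0"
  shows "inverse (real n + a) *\<^sub>R (sum_list ys + a *\<^sub>R z) \<in> K"
proof -
  have ne: "ys \<noteq> []" using ys n by auto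
  have m: "inverse (real n) *\<^sub>R sum_list ys \<in> K" using avg_in[OF K ys(1) ne] ys by simp
  have pos: "real n + a > 0" using n a by simp
  have "(real n / (real n + a)) *\<^sub>R (inverse (real n) *\<^sub>R sum_list ys) + (a / (real n + a)) *\<^sub>R z \<in> K"
    using m z a pos by (intro convexD[OF K]) (auto simp: add_divide_distrib[symmetric])
  also have "(real n / (real n + a)) *\<^sub>R (inverse (real n) *\<^sub>R sum_list ys) + (a / (real n + a)) *\<^sub>R z
      = inverse (real n + a) *\<^sub>R (sum_list ys + a *\<^sub>R z)"
  proof -
    have c1: "(real n / (real n + a)) * inverse (real n) = inverse (real n + a)" using n by (simp add: field_simps)
    have c2: "a / (real n + a) = inverse (real n + a) * a" by (simp add: divide_inverse)
    show ?thesis unfolding scaleR_scaleR c1 c2 by (simp add: scaleR_add_right)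
  qed
  finally show ?thesis .
qed

locale Jsetting =
  fixes K :: "'a::{real_vector,t2_space} set" and M :: "'a measure" and a :: real
  assumes LC: "locally_convex_tvs TYPE('a)" and Kc: "compact K"
    and P: "prob_space M" and Ssets: "sets M = sets (restrict_space borel K)"
begin

lemma sp: "space M = K" by (rule space_restr[OF Ssets])

lemma J_cont:
  assumes G: "continuous_on (SS K a m) G"
  shows "k \<le> m \<Longrightarrow> continuous_on (SS K a (m - k)) (J M k G)"
proof (induction k)
  case 0 then show ?case using G by simp
next
  case (Suc k)
  define j where "j = m - Suc k"
  have mk: "m - k = Suc j" using Suc.prems unfolding j_def by simp
  have IH: "continuous_on (SS K a (Suc j)) (J M k G)" using Suc mk by simp
  have H: "continuous_on (SS K a j \<times> K) (\<lambda>q. J M k G (snd q + fst q))"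
  proof (rule continuous_on_compose2[OF IH])
    show "continuous_on (SS K a j \<times> K) (\<lambda>q. snd q + fst q)"
      by (intro lc_add[OF LC] continuous_on_fst continuous_on_snd continuous_on_id)
    show "(\<lambda>q. snd q + fst q) ` (SS K a j \<times> K) \<subseteq> SS K a (Suc j)"
      using SS_step by auto
  qed
  have "continuous_on (SS K a j) (\<lambda>s. \<integral>y. (\<lambda>q. J M k G (snd q + fst q)) (s,y) \<partial>M)"
    by (rule cont_param_integral[OF P Ssets Kc H])
  then show ?case unfolding j_def[symmetric] by simp
qed

lemma J_int:
  assumes G: "continuous_on (SS K a m) G" and k: "Suc k \<le> m" and s: "s \<in> SS K a (m - Suc k)"
  shows "integrable M (\<lambda>y. J M k G (y + s))"
proof (rule integrable_cont[OF P Ssets Kc])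
  have mk: "m - k = Suc (m - Suc k)" using k by simp
  have IH: "continuous_on (SS K a (Suc (m - Suc k))) (J M k G)" using J_cont[OF G, of k] k mk by simp
  show "continuous_on K (\<lambda>y. J M k G (y + s))"
  proof (rule continuous_on_compose2[OF IH])
    show "continuous_on K (\<lambda>y. y + s)" by (intro lc_add[OF LC] continuous_on_id continuous_on_const)
    show "(\<lambda>y. y + s) ` K \<subseteq> SS K a (Suc (m - Suc k))" using SS_step s by auto
  qed
qed

lemma J_mono:
  assumes G1: "continuous_on (SS K a m) G1" and G2: "continuous_on (SS K a m) G2"
    and le: "\<And>s. s \<in> SS K a m \<Longrightarrow> G1 s \<le> G2 s"
  shows "k \<le> m \<Longrightarrow> s \<in> SS K a (m - k) \<Longrightarrow> J M k G1 s \<le> J M k G2 s"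
proof (induction k arbitrary: s)
  case 0 then show ?case using le by simp
next
  case (Suc k)
  have mk: "m - k = Suc (m - Suc k)" using Suc.prems by simp
  show ?case
    using Suc.prems J_int[OF G1 Suc.prems(1,2)] J_int[OF G2 Suc.prems(1,2)]
    by (simp, intro integral_mono) (auto simp: sp mk intro!: Suc.IH SS_step)
qed

lemma J_add:
  assumes G1: "continuous_on (SS K a m) G1" and G2: "continuous_on (SS K a m) G2"
  shows "k \<le> m \<Longrightarrow> s \<in> SS K a (m - k) \<Longrightarrow> J M k (\<lambda>s. G1 s + G2 s) s = J M k G1 s + J M k G2 s"
proof (induction k arbitrary: s)
  case 0 then show ?case by simp
next
  case (Suc k)
  have mk: "m - k = Suc (m - Suc k)" using Suc.prems by simp
  have "J M (Suc k) (\<lambda>s. G1 s + G2 s) s = (\<integral>y. J M k G1 (y + s) + J M k G2 (y + s) \<partial>M)"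
    using Suc.prems by (simp, intro Bochner_Integration.integral_cong) (auto simp: sp mk intro!: Suc.IH SS_step)
  also have "\<dots> = J M (Suc k) G1 s + J M (Suc k) G2 s"
    using J_int[OF G1 Suc.prems(1,2)] J_int[OF G2 Suc.prems(1,2)]
    by (simp add: Bochner_Integration.integral_add)
  finally show ?case .
qed

lemma J_cmul: "J M k (\<lambda>s. c * G s) s = c * J M k G s"
  by (induction k arbitrary: s) simp_all

lemma J_const: "J M k (\<lambda>_. c) s = c"
proof (induction k arbitrary: s)
  case 0 then show ?case by simp
next
  case (Suc k)
  interpret prob_space M by (rule P)
  show ?case using Suc prob_space by simp
qed

lemma J_sq:
  fixes l :: "'a \<Rightarrow> real"
  assumes l: "linear l" "continuous_on UNIV l" and xb: "(\<integral>y. l y \<partial>M) = xb"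
  shows "J M k (\<lambda>s. (\<alpha> * l s + \<beta>)^2) s
      = (\<alpha> * l s + \<beta> + real k * \<alpha> * xb)^2 + real k * \<alpha>^2 * (\<integral>y. (l y - xb)^2 \<partial>M)"
proof (induction k arbitrary: s)
  case 0 then show ?case by simp
next
  case (Suc k)
  interpret prob_space M by (rule P)
  define V where "V = (\<integral>y. (l y - xb)^2 \<partial>M)"
  define w where "w = \<alpha> * l s + \<beta> + real (Suc k) * \<alpha> * xb"
  have lK: "continuous_on K l" using l(2) by (rule continuous_on_subset) auto
  have i1: "integrable M l" by (rule integrable_cont[OF P Ssets Kc lK])
  have i2: "integrable M (\<lambda>y. (l y - xb)^2)"
    by (rule integrable_cont[OF P Ssets Kc]) (intro continuous_intros lK)
  have eq: "J M k (\<lambda>s. (\<alpha> * l s + \<beta>)^2) (y + s)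
      = \<alpha>^2 * (l y - xb)^2 + (2 * \<alpha> * w) * (l y - xb) + (w^2 + real k * \<alpha>^2 * V)" for y
    unfolding Suc.IH V_def[symmetric] w_def using linear_add[OF l(1), of y s]
    by (simp add: power2_eq_square algebra_simps)
  have "J M (Suc k) (\<lambda>s. (\<alpha> * l s + \<beta>)^2) s
      = (\<integral>y. \<alpha>^2 * (l y - xb)^2 + (2 * \<alpha> * w) * (l y - xb) + (w^2 + real k * \<alpha>^2 * V) \<partial>M)"
    by (simp add: eq)
  also have "\<dots> = \<alpha>^2 * V + (2 * \<alpha> * w) * ((\<integral>y. l y \<partial>M) - xb) + (w^2 + real k * \<alpha>^2 * V)"
    using i1 i2 prob_space
    by (simp add: Bochner_Integration.integral_add Bochner_Integration.integral_diff V_def)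
  also have "\<dots> = w^2 + real (Suc k) * \<alpha>^2 * V" using xb by (simp add: algebra_simps)
  finally show ?case unfolding w_def V_def .
qed

end

lemma korovkin_ineq:
  fixes K :: "'a::{real_vector,t2_space} set" and f :: "'a \<Rightarrow> real"
  assumes LC: "locally_convex_tvs TYPE('a)" and Kc: "compact K"
    and f: "continuous_on K f" and e: "e > 0"
  shows "\<exists>(Ls :: ('a \<Rightarrow> real) set) C. finite Ls \<and> C \<ge> 0 \<and> (\<forall>l\<in>Ls. linear l \<and> continuous_on UNIV l) \<and>
     (\<forall>x\<in>K. \<forall>y\<in>K. \<bar>f y - f x\<bar> \<le> e + C * (\<Sum>l\<in>Ls. (l y - l x)^2))"
proof -
  define g where "g p = \<bar>f (snd p) - f (fst p)\<bar>" for p :: "'a \<times> 'a"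
  define D where "D = (K \<times> K) \<inter> g -` {e..}"
  have c1: "continuous_on (K \<times> K) (\<lambda>p. f (snd p))"
    by (rule continuous_on_compose2[OF f continuous_on_snd[OF continuous_on_id]]) auto
  have c2: "continuous_on (K \<times> K) (\<lambda>p. f (fst p))"
    by (rule continuous_on_compose2[OF f continuous_on_fst[OF continuous_on_id]]) auto
  have gc: "continuous_on (K \<times> K) g" unfolding g_def by (intro continuous_intros c1 c2)
  have Dc: "compact D" unfolding D_def
    by (rule closedin_compact[OF compact_Times[OF Kc Kc] continuous_closedin_preimage[OF gc closed_atLeast]])
  show ?thesis
  proof (cases "D = {}")
    case True
    have "\<bar>f y - f x\<bar> \<le> e + 0 * (\<Sum>l\<in>{}. (l y - l x)^2)" if "x \<in> K" "y \<in> K" for x y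
    proof -
      have "(x,y) \<notin> D" using True by blast
      then show ?thesis using that unfolding D_def g_def by auto
    qed
    then show ?thesis by (intro exI[of _ "{}"] exI[of _ 0]) auto
  next
    case False
    define lf where "lf p = (SOME l::'a \<Rightarrow> real. linear l \<and> continuous_on UNIV l \<and> l (fst p) \<noteq> l (snd p))" for p :: "'a \<times> 'a"
    have lfp: "linear (lf p) \<and> continuous_on UNIV (lf p) \<and> lf p (fst p) \<noteq> lf p (snd p)" if p: "p \<in> D" for p
    proof -
      have "fst p \<noteq> snd p" using p e unfolding D_def g_def by auto
      from separate[OF LC this] show ?thesis unfolding lf_def by (rule someI_ex)
    qed
    define Ob where "Ob p = (\<lambda>q. lf p (fst q) - lf p (snd q)) -` (- {0})" for p
    have Obo: "open (Ob p)" if "p \<in> D" for p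
    proof -
      have lc: "continuous_on UNIV (lf p)" using lfp[OF that] by blast
      have "continuous_on UNIV (\<lambda>q::'a\<times>'a. lf p (fst q) - lf p (snd q))"
        by (intro continuous_on_diff continuous_on_compose2[OF lc] continuous_on_fst continuous_on_snd continuous_on_id) auto
      then show ?thesis unfolding Ob_def by (intro open_vimage) auto
    qed
    have Dcov: "D \<subseteq> (\<Union>p\<in>D. Ob p)" using lfp unfolding Ob_def by force
    obtain D' where D': "D' \<subseteq> D" "finite D'" "D \<subseteq> (\<Union>p\<in>D'. Ob p)"
      using compactE_image[OF Dc, of D Ob] Obo Dcov by metis
    define Ls where "Ls = lf ` D'"
    have Lsp: "\<forall>l\<in>Ls. linear l \<and> continuous_on UNIV l" using lfp D' unfolding Ls_def by blast
    have Lsf: "finite Ls" using D' unfolding Ls_def by simp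
    define Q where "Q p = (\<Sum>l\<in>Ls. (l (snd p) - l (fst p))^2)" for p :: "'a \<times> 'a"
    have Qnn: "0 \<le> Q p" for p unfolding Q_def by (intro sum_nonneg) auto
    have Qc: "continuous_on D Q" unfolding Q_def
    proof (intro continuous_on_sum)
      fix l assume "l \<in> Ls"
      then have lc: "continuous_on UNIV l" using Lsp by blast
      show "continuous_on D (\<lambda>p. (l (snd p) - l (fst p))^2)"
        by (intro continuous_intros continuous_on_compose2[OF lc] continuous_on_fst continuous_on_snd continuous_on_id) auto
    qed
    have Qpos: "Q p > 0" if p: "p \<in> D" for p
    proof -
      obtain q where q: "q \<in> D'" "p \<in> Ob q" using D' p by blast
      have "lf q \<in> Ls" using q unfolding Ls_def by blast
      moreover have "(lf q (snd p) - lf q (fst p))^2 > 0" using q unfolding Ob_def by auto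
      moreover have "(lf q (snd p) - lf q (fst p))^2 \<le> (\<Sum>l\<in>Ls. (l (snd p) - l (fst p))^2)"
        using \<open>lf q \<in> Ls\<close> Lsf by (intro member_le_sum) auto
      ultimately show ?thesis unfolding Q_def by linarith
    qed
    have "compact (Q ` D)" by (rule compact_continuous_image[OF Qc Dc])
    then obtain d where d: "d \<in> Q ` D" "\<And>t. t \<in> Q ` D \<Longrightarrow> d \<le> t"
      using compact_attains_inf[of "Q ` D"] False by blast
    have dpos: "d > 0" using d Qpos by auto
    have "compact (f ` K)" by (rule compact_continuous_image[OF f Kc])
    then obtain B0 where B0: "\<forall>x\<in>f ` K. norm x \<le> B0" using compact_imp_bounded bounded_iff by metis
    define B where "B = max B0 0"
    have B: "\<bar>f x\<bar> \<le> B" "B \<ge> 0" if "x \<in> K" for x using B0 that unfolding B_def by force+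
    define C where "C = 2 * B / d"
    have C0: "C \<ge> 0" unfolding C_def using dpos B False unfolding D_def by auto
    have "\<bar>f y - f x\<bar> \<le> e + C * Q (x,y)" if x: "x \<in> K" and y: "y \<in> K" for x y
    proof (cases "(x,y) \<in> D")
      case True
      have "\<bar>f y - f x\<bar> \<le> 2 * B" using B x y by (smt (verit))
      also have "2 * B = C * d" unfolding C_def using dpos by simp
      also have "C * d \<le> C * Q (x,y)" using C0 d True by (intro mult_left_mono) auto
      finally show ?thesis using e by simp
    next
      case False
      then have "\<bar>f y - f x\<bar> < e" using x y unfolding D_def g_def by auto
      moreover have "0 \<le> C * Q (x,y)" using C0 Qnn by simp
      ultimately show ?thesis by simp
    qed
    then show ?thesis using Lsf C0 Lsp unfolding Q_def by (intro exI[of _ Ls] exI[of _ C]) auto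
  qed
qed

locale MS =
  fixes K :: "'a::{real_vector,t2_space} set"
    and T :: "('a \<Rightarrow> real) \<Rightarrow> ('a \<Rightarrow> real)"
    and mu :: "'a \<Rightarrow> 'a measure"
    and mus :: "nat \<Rightarrow> 'a measure"
    and a :: real
  assumes LC: "locally_convex_tvs TYPE('a)"
    and Kcv: "convex K" and Kc: "compact K"
    and Tfix: "\<And>h. continuous_on K h \<Longrightarrow> affine_on K h \<Longrightarrow> \<forall>x\<in>K. T h x = h x"
    and muP: "\<And>x. x \<in> K \<Longrightarrow> borel_prob_on K (mu x)"
    and muT: "\<And>x f. x \<in> K \<Longrightarrow> continuous_on K f \<Longrightarrow> (\<integral>y. f y \<partial>(mu x)) = T f x"
    and a0: "a \<ge> 0"
    and musP: "\<And>n. n \<ge> 1 \<Longrightarrow> borel_prob_on K (mus n)"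
begin

lemma Js: assumes x: "x \<in> K" shows "Jsetting K (mu x)"
proof -
  have p: "prob_space (mu x)" "sets (mu x) = sets (restrict_space borel K)"
    using muP[OF x] unfolding borel_prob_on_def by auto
  show ?thesis by (rule Jsetting.intro[OF LC Kc p])
qed

lemma musPS: "n \<ge> 1 \<Longrightarrow> prob_space (mus n)" "n \<ge> 1 \<Longrightarrow> sets (mus n) = sets (restrict_space borel K)"
  using musP unfolding borel_prob_on_def by auto

lemma CJ: "C_op mu mus a n g x = (\<integral>z. J (mu x) n (\<lambda>s. g (inverse (real n + a) *\<^sub>R s)) (a *\<^sub>R z) \<partial>(mus n))"
proof -
  have "iter_int n (mu x) (\<lambda>xs. g (inverse (real n + a) *\<^sub>R (sum_list xs + a *\<^sub>R z))) []
      = J (mu x) n (\<lambda>s. g (inverse (real n + a) *\<^sub>R s)) (a *\<^sub>R z)" for z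
    using iter_int_J[of n "mu x" "\<lambda>s. g (inverse (real n + a) *\<^sub>R s)" "a *\<^sub>R z" "[]"] by simp
  then show ?thesis unfolding C_op_def by simp
qed

lemma Gcont:
  assumes n: "n \<ge> 1" and g: "continuous_on K g"
  shows "continuous_on (SS K a n) (\<lambda>s. g (inverse (real n + a) *\<^sub>R s))"
proof (rule continuous_on_compose2[OF g])
  show "continuous_on (SS K a n) (\<lambda>s. inverse (real n + a) *\<^sub>R s)"
    by (intro lc_scaleR[OF LC] continuous_on_const continuous_on_id)
  show "(\<lambda>s. inverse (real n + a) *\<^sub>R s) ` SS K a n \<subseteq> K"
    unfolding SS_def using comb_in[OF Kcv _ _ n _ a0] by auto
qed

lemma Zcont:
  assumes x: "x \<in> K" and n: "n \<ge> 1" and g: "continuous_on K g"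
  shows "continuous_on K (\<lambda>z. J (mu x) n (\<lambda>s. g (inverse (real n + a) *\<^sub>R s)) (a *\<^sub>R z))"
proof -
  interpret Jsetting K "mu x" a by (rule Js[OF x])
  have c: "continuous_on (SS K a 0) (J (mu x) n (\<lambda>s. g (inverse (real n + a) *\<^sub>R s)))"
    using J_cont[OF Gcont[OF n g], of n] by simp
  show ?thesis
  proof (rule continuous_on_compose2[OF c])
    show "continuous_on K (\<lambda>z. a *\<^sub>R z)" by (intro lc_scaleR[OF LC] continuous_on_const continuous_on_id)
    show "(\<lambda>z. a *\<^sub>R z) ` K \<subseteq> SS K a 0" using SS0 by blast
  qed
qed

lemma Zint:
  assumes x: "x \<in> K" and n: "n \<ge> 1" and g: "continuous_on K g"
  shows "integrable (mus n) (\<lambda>z. J (mu x) n (\<lambda>s. g (inverse (real n + a) *\<^sub>R s)) (a *\<^sub>R z))"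
  by (rule integrable_cont[OF musPS[OF n] Kc Zcont[OF x n g]])

lemma L_mono:
  assumes x: "x \<in> K" and n: "n \<ge> 1" and g1: "continuous_on K g1" and g2: "continuous_on K g2"
    and le: "\<And>y. y \<in> K \<Longrightarrow> g1 y \<le> g2 y"
  shows "C_op mu mus a n g1 x \<le> C_op mu mus a n g2 x"
proof -
  interpret Jsetting K "mu x" a by (rule Js[OF x])
  have sp: "space (mus n) = K" using space_restr[OF musPS(2)[OF n]] .
  show ?thesis unfolding CJ
  proof (rule integral_mono[OF Zint[OF x n g1] Zint[OF x n g2]])
    fix z assume "z \<in> space (mus n)"
    then have z: "a *\<^sub>R z \<in> SS K a (n - n)" using SS0 sp by simp
    show "J (mu x) n (\<lambda>s. g1 (inverse (real n + a) *\<^sub>R s)) (a *\<^sub>R z) \<le> J (mu x) n (\<lambda>s. g2 (inverse (real n + a) *\<^sub>R s)) (a *\<^sub>R z)"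
    proof (rule J_mono[OF Gcont[OF n g1] Gcont[OF n g2] _ order_refl z])
      fix s assume "s \<in> SS K a n"
      then have "inverse (real n + a) *\<^sub>R s \<in> K" unfolding SS_def using comb_in[OF Kcv _ _ n _ a0] by auto
      then show "g1 (inverse (real n + a) *\<^sub>R s) \<le> g2 (inverse (real n + a) *\<^sub>R s)" by (rule le)
    qed
  qed
qed

lemma L_add:
  assumes x: "x \<in> K" and n: "n \<ge> 1" and g1: "continuous_on K g1" and g2: "continuous_on K g2"
  shows "C_op mu mus a n (\<lambda>y. g1 y + g2 y) x = C_op mu mus a n g1 x + C_op mu mus a n g2 x"
proof -
  interpret Jsetting K "mu x" a by (rule Js[OF x])
  have sp: "space (mus n) = K" using space_restr[OF musPS(2)[OF n]] .
  have "C_op mu mus a n (\<lambda>y. g1 y + g2 y) x = (\<integral>z. J (mu x) n (\<lambda>s. g1 (inverse (real n + a) *\<^sub>R s)) (a *\<^sub>R z)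
      + J (mu x) n (\<lambda>s. g2 (inverse (real n + a) *\<^sub>R s)) (a *\<^sub>R z) \<partial>(mus n))"
    unfolding CJ
  proof (rule Bochner_Integration.integral_cong[OF refl])
    fix z assume "z \<in> space (mus n)"
    then have z: "a *\<^sub>R z \<in> SS K a (n - n)" using SS0 sp by simp
    show "J (mu x) n (\<lambda>s. g1 (inverse (real n + a) *\<^sub>R s) + g2 (inverse (real n + a) *\<^sub>R s)) (a *\<^sub>R z) =
      J (mu x) n (\<lambda>s. g1 (inverse (real n + a) *\<^sub>R s)) (a *\<^sub>R z) + J (mu x) n (\<lambda>s. g2 (inverse (real n + a) *\<^sub>R s)) (a *\<^sub>R z)"
      by (rule J_add[OF Gcont[OF n g1] Gcont[OF n g2] order_refl z])
  qed
  also have "\<dots> = C_op mu mus a n g1 x + C_op mu mus a n g2 x"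
    unfolding CJ by (rule Bochner_Integration.integral_add[OF Zint[OF x n g1] Zint[OF x n g2]])
  finally show ?thesis .
qed

lemma L_cmul:
  assumes x: "x \<in> K"
  shows "C_op mu mus a n (\<lambda>y. c * g y) x = c * C_op mu mus a n g x"
proof -
  interpret Jsetting K "mu x" a by (rule Js[OF x])
  show ?thesis unfolding CJ using J_cmul[of n c] by simp
qed

lemma L_const:
  assumes x: "x \<in> K" and n: "n \<ge> 1"
  shows "C_op mu mus a n (\<lambda>y. c) x = c"
proof -
  interpret Jsetting K "mu x" a by (rule Js[OF x])
  interpret P: prob_space "mus n" by (rule musPS[OF n])
  show ?thesis unfolding CJ using J_const[of n c] P.prob_space by simp
qed

lemma L_sum:
  assumes x: "x \<in> K" and n: "n \<ge> 1" and fin: "finite A"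
  shows "(\<forall>i\<in>A. continuous_on K (g i)) \<Longrightarrow> C_op mu mus a n (\<lambda>y. \<Sum>i\<in>A. g i y) x = (\<Sum>i\<in>A. C_op mu mus a n (g i) x)"
  using fin
proof (induction A rule: finite_induct)
  case empty then show ?case using L_const[OF x n, of 0] by simp
next
  case (insert i A)
  have c: "continuous_on K (\<lambda>y. \<Sum>i\<in>A. g i y)" using insert by (intro continuous_on_sum) auto
  have "C_op mu mus a n (\<lambda>y. \<Sum>i\<in>insert i A. g i y) x = C_op mu mus a n (\<lambda>y. g i y + (\<Sum>i\<in>A. g i y)) x"
    using insert by simp
  also have "\<dots> = C_op mu mus a n (g i) x + C_op mu mus a n (\<lambda>y. \<Sum>i\<in>A. g i y) x"
    using L_add[OF x n _ c, of "g i"] insert by simp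
  finally show ?case using insert by simp
qed

lemma l_mean:
  fixes l :: "'a \<Rightarrow> real"
  assumes x: "x \<in> K" and l: "linear l" "continuous_on UNIV l"
  shows "(\<integral>y. l y \<partial>(mu x)) = l x"
proof -
  have lK: "continuous_on K l" using l(2) by (rule continuous_on_subset) auto
  have "affine_on K l" unfolding affine_on_def
    using linear_add[OF l(1)] linear_cmul[OF l(1)] by simp
  then show ?thesis using muT[OF x lK] Tfix[OF lK] x by simp
qed

lemma L_sq:
  fixes l :: "'a \<Rightarrow> real"
  assumes x: "x \<in> K" and n: "n \<ge> 1" and l: "linear l" "continuous_on UNIV l"
    and B: "\<And>y. y \<in> K \<Longrightarrow> \<bar>l y\<bar> \<le> B"
  shows "C_op mu mus a n (\<lambda>y. (l y - l x)^2) x \<le> inverse (real n + a)^2 * (a^2 + real n) * (4 * B^2)"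
proof -
  interpret Jsetting K "mu x" a by (rule Js[OF x])
  interpret P: prob_space "mus n" by (rule musPS[OF n])
  interpret Q: prob_space "mu x" by (rule P)
  define \<alpha> where "\<alpha> = inverse (real n + a)"
  have npos: "real n + a > 0" using n a0 by simp
  have \<alpha>: "\<alpha> * (real n + a) = 1" unfolding \<alpha>_def using npos by simp
  have spm: "space (mus n) = K" using space_restr[OF musPS(2)[OF n]] .
  have lK: "continuous_on K l" using l(2) by (rule continuous_on_subset) auto
  have bnd: "(l y - l x)^2 \<le> 4 * B^2" if "y \<in> K" for y
  proof -
    have "\<bar>l y - l x\<bar> \<le> 2 * B" using B[OF that] B[OF x] by linarith
    then have "\<bar>l y - l x\<bar>^2 \<le> (2 * B)^2" by (intro power_mono) auto
    then show ?thesis by (simp add: power_mult_distrib)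
  qed
  define V where "V = (\<integral>y. (l y - l x)^2 \<partial>(mu x))"
  have V: "V \<le> 4 * B^2"
  proof -
    have "V \<le> (\<integral>y. 4 * B^2 \<partial>(mu x))" unfolding V_def
      by (intro integral_mono integrable_cont[OF P Ssets Kc]) (auto intro!: continuous_intros lK bnd simp: sp)
    then show ?thesis using Q.prob_space by simp
  qed
  have fe: "(\<lambda>s. (l (\<alpha> *\<^sub>R s) - l x)^2) = (\<lambda>s. (\<alpha> * l s + (- l x))^2)"
    using linear_cmul[OF l(1)] by simp
  have Jz: "J (mu x) n (\<lambda>s. (l (\<alpha> *\<^sub>R s) - l x)^2) (a *\<^sub>R z) = (\<alpha> * a * (l z - l x))^2 + real n * \<alpha>^2 * V" for z
  proof -
    have "J (mu x) n (\<lambda>s. (l (\<alpha> *\<^sub>R s) - l x)^2) (a *\<^sub>R z)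
        = (\<alpha> * l (a *\<^sub>R z) + - l x + real n * \<alpha> * l x)^2 + real n * \<alpha>^2 * V"
      unfolding fe V_def by (rule J_sq[OF l l_mean[OF x l]])
    also have "\<alpha> * l (a *\<^sub>R z) + - l x + real n * \<alpha> * l x = \<alpha> * a * (l z - l x)"
    proof -
      have "l x = \<alpha> * (real n + a) * l x" using \<alpha> by simp
      then show ?thesis using linear_cmul[OF l(1), of a z] by (simp add: algebra_simps)
    qed
    finally show ?thesis .
  qed
  have "C_op mu mus a n (\<lambda>y. (l y - l x)^2) x = (\<integral>z. J (mu x) n (\<lambda>s. (l (\<alpha> *\<^sub>R s) - l x)^2) (a *\<^sub>R z) \<partial>(mus n))"
    unfolding CJ \<alpha>_def ..
  also have "\<dots> \<le> (\<integral>z. \<alpha>^2 * (a^2 + real n) * (4 * B^2) \<partial>(mus n))"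
  proof (rule integral_mono)
    show "integrable (mus n) (\<lambda>z. J (mu x) n (\<lambda>s. (l (\<alpha> *\<^sub>R s) - l x)^2) (a *\<^sub>R z))"
      unfolding \<alpha>_def by (rule Zint[OF x n]) (intro continuous_intros lK)
    show "integrable (mus n) (\<lambda>z. \<alpha>^2 * (a^2 + real n) * (4 * B^2))" by simp
    fix z assume "z \<in> space (mus n)"
    then have z: "z \<in> K" using spm by simp
    have "(\<alpha> * a * (l z - l x))^2 = \<alpha>^2 * a^2 * (l z - l x)^2" by (simp add: power_mult_distrib)
    also have "\<dots> \<le> \<alpha>^2 * a^2 * (4 * B^2)" using bnd[OF z] by (intro mult_left_mono) auto
    finally have t1: "(\<alpha> * a * (l z - l x))^2 \<le> \<alpha>^2 * a^2 * (4 * B^2)" .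
    have t2: "real n * \<alpha>^2 * V \<le> real n * \<alpha>^2 * (4 * B^2)" using V by (intro mult_left_mono) auto
    show "J (mu x) n (\<lambda>s. (l (\<alpha> *\<^sub>R s) - l x)^2) (a *\<^sub>R z) \<le> \<alpha>^2 * (a^2 + real n) * (4 * B^2)"
      unfolding Jz using t1 t2 by (simp add: algebra_simps)
  qed
  also have "\<dots> = \<alpha>^2 * (a^2 + real n) * (4 * B^2)" using P.prob_space by simp
  finally show ?thesis unfolding \<alpha>_def .
qed

end

theorem theorem3p2:
  fixes K :: "'a::{real_vector,t2_space} set"
    and T :: "('a \<Rightarrow> real) \<Rightarrow> ('a \<Rightarrow> real)"
    and mu :: "'a \<Rightarrow> 'a measure"
    and mus :: "nat \<Rightarrow> 'a measure"
    and a :: real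
  assumes "locally_convex_tvs TYPE('a)"
    and "convex K" and "compact K"
    and "markov_operator K T"
    and "\<And>h. continuous_on K h \<Longrightarrow> affine_on K h \<Longrightarrow> \<forall>x\<in>K. T h x = h x"
    and "\<And>x. x \<in> K \<Longrightarrow> borel_prob_on K (mu x)"
    and "\<And>x f. x \<in> K \<Longrightarrow> continuous_on K f \<Longrightarrow> (\<integral>y. f y \<partial>(mu x)) = T f x"
    and "a \<ge> 0"
    and "\<And>n. n \<ge> 1 \<Longrightarrow> borel_prob_on K (mus n)"
    and "continuous_on K f"
  shows "uniform_limit K (\<lambda>n. C_op mu mus a n f) f sequentially"
proof -
  interpret MS K T mu mus a by (rule MS.intro[OF assms(1-3) assms(5-9)])
  have f: "continuous_on K f" by (rule assms(10))
  show ?thesis unfolding uniform_limit_iff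
  proof (intro allI impI)
    fix e :: real assume e: "e > 0"
    obtain Ls Cc where Ls: "finite Ls" "Cc \<ge> 0" "\<forall>l\<in>Ls. linear l \<and> continuous_on UNIV l"
      and kor: "\<forall>x\<in>K. \<forall>y\<in>K. \<bar>f y - f x\<bar> \<le> e/2 + Cc * (\<Sum>l\<in>Ls. (l y - l x)^2)"
      using korovkin_ineq[OF LC Kc f, of "e/2"] e by auto
    have "\<forall>l\<in>Ls. \<exists>B. \<forall>y\<in>K. \<bar>l y\<bar> \<le> B"
    proof
      fix l assume "l \<in> Ls"
      then have lK: "continuous_on K l" using Ls(3) continuous_on_subset by blast
      have "compact (l ` K)" by (rule compact_continuous_image[OF lK Kc])
      then obtain B where "\<forall>x\<in>l ` K. norm x \<le> B" using compact_imp_bounded bounded_iff by metis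
      then show "\<exists>B. \<forall>y\<in>K. \<bar>l y\<bar> \<le> B" by auto
    qed
    then obtain Bf where Bf: "\<And>l y. l \<in> Ls \<Longrightarrow> y \<in> K \<Longrightarrow> \<bar>l y\<bar> \<le> Bf l" by metis
    define R where "R = 4 * Cc * (\<Sum>l\<in>Ls. (Bf l)^2)"
    have R0: "R \<ge> 0" unfolding R_def using Ls(2) by (intro mult_nonneg_nonneg sum_nonneg) auto
    define N where "N = nat \<lceil>2 * R * (a^2 + 1) / e\<rceil> + 1"
    show "\<forall>\<^sub>F n in sequentially. \<forall>x\<in>K. dist (C_op mu mus a n f x) (f x) < e"
      unfolding eventually_sequentially
    proof (intro exI[of _ N] allI impI ballI)
      fix n x assume nN: "N \<le> n" and x: "x \<in> K"
      have n: "n \<ge> 1" using nN unfolding N_def by simp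
      have nbig: "real n > 2 * R * (a^2 + 1) / e"
      proof -
        have "2 * R * (a^2 + 1) / e \<le> real (nat \<lceil>2 * R * (a^2 + 1) / e\<rceil>)" by linarith
        also have "\<dots> < real n" using nN unfolding N_def by linarith
        finally show ?thesis .
      qed
      define \<alpha> where "\<alpha> = inverse (real n + a)"
      have npos: "real n > 0" using n by simp
      have h1: "\<alpha>^2 * (a^2 + real n) \<le> (a^2 + 1) / real n"
      proof -
        have sq: "real n * real n \<le> (real n + a)^2" using a0 npos by (simp add: power2_eq_square mult_mono)
        have "1 * a^2 \<le> real n * a^2" using n by (intro mult_right_mono) auto
        then have num: "a^2 + real n \<le> (a^2 + 1) * real n" by (simp add: algebra_simps)
        have "\<alpha>^2 * (a^2 + real n) = (a^2 + real n) / (real n + a)^2" unfolding \<alpha>_def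
          by (simp add: power_inverse divide_inverse)
        also have "\<dots> \<le> ((a^2 + 1) * real n) / (real n * real n)"
          using num sq npos by (intro frac_le) auto
        also have "\<dots> = (a^2 + 1) / real n" using npos by simp
        finally show ?thesis .
      qed
      have h2: "(a^2 + 1) / real n * R < e / 2"
      proof -
        have "2 * R * (a^2 + 1) < real n * e" using nbig e by (simp add: field_simps)
        then show ?thesis using npos e by (simp add: field_simps)
      qed
      have key: "\<alpha>^2 * (a^2 + real n) * R < e / 2"
        using mult_right_mono[OF h1 R0] h2 by linarith
      define Q where "Q y = (\<Sum>l\<in>Ls. (l y - l x)^2)" for y
      have lK: "continuous_on K l" if "l \<in> Ls" for l using Ls(3) that continuous_on_subset by blast
      have qc: "\<forall>l\<in>Ls. continuous_on K (\<lambda>y. (l y - l x)^2)" using lK by (auto intro!: continuous_intros)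
      have Qc: "continuous_on K Q" unfolding Q_def using qc by (intro continuous_on_sum) auto
      have LQ: "C_op mu mus a n Q x \<le> \<alpha>^2 * (a^2 + real n) * (4 * (\<Sum>l\<in>Ls. (Bf l)^2))"
      proof -
        have "C_op mu mus a n Q x = (\<Sum>l\<in>Ls. C_op mu mus a n (\<lambda>y. (l y - l x)^2) x)"
          unfolding Q_def by (rule L_sum[OF x n Ls(1) qc])
        also have "\<dots> \<le> (\<Sum>l\<in>Ls. \<alpha>^2 * (a^2 + real n) * (4 * (Bf l)^2))"
          unfolding \<alpha>_def using Ls(3) Bf by (intro sum_mono L_sq[OF x n]) auto
        also have "\<dots> = \<alpha>^2 * (a^2 + real n) * (4 * (\<Sum>l\<in>Ls. (Bf l)^2))"
          by (simp add: sum_distrib_left)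
        finally show ?thesis .
      qed
      have Qnn: "0 \<le> C_op mu mus a n Q x"
        using L_mono[OF x n continuous_on_const Qc, of 0] L_const[OF x n, of 0]
        unfolding Q_def by (simp add: sum_nonneg)
      have LR: "C_op mu mus a n (\<lambda>y. e/2 + Cc * Q y) x = e/2 + Cc * C_op mu mus a n Q x"
        using L_add[OF x n continuous_on_const continuous_on_mult[OF continuous_on_const Qc], of "e/2" Cc]
          L_const[OF x n, of "e/2"] L_cmul[OF x, of n Cc Q] by simp
      have Rc: "continuous_on K (\<lambda>y. e/2 + Cc * Q y)" by (intro continuous_intros Qc)
      have bound: "e/2 + Cc * C_op mu mus a n Q x < e"
      proof -
        have "Cc * C_op mu mus a n Q x \<le> Cc * (\<alpha>^2 * (a^2 + real n) * (4 * (\<Sum>l\<in>Ls. (Bf l)^2)))"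
          using LQ Ls(2) by (intro mult_left_mono) auto
        also have "\<dots> = \<alpha>^2 * (a^2 + real n) * R" unfolding R_def by (simp add: algebra_simps)
        finally show ?thesis using key by linarith
      qed
      have kx: "f y - f x \<le> e/2 + Cc * Q y \<and> f x - f y \<le> e/2 + Cc * Q y" if y: "y \<in> K" for y
        using kor[rule_format, OF x y] unfolding Q_def by (simp add: abs_le_iff)
      have up: "C_op mu mus a n (\<lambda>y. f y - f x) x \<le> C_op mu mus a n (\<lambda>y. e/2 + Cc * Q y) x"
        using kx by (intro L_mono[OF x n _ Rc]) (auto intro!: continuous_intros f)
      have lo: "C_op mu mus a n (\<lambda>y. f x - f y) x \<le> C_op mu mus a n (\<lambda>y. e/2 + Cc * Q y) x"
        using kx by (intro L_mono[OF x n _ Rc]) (auto intro!: continuous_intros f)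
      have e1: "C_op mu mus a n (\<lambda>y. f y - f x) x = C_op mu mus a n f x - f x"
        using L_add[OF x n f continuous_on_const, of "- f x"] L_const[OF x n, of "- f x"] by simp
      have e2: "C_op mu mus a n (\<lambda>y. f x - f y) x = f x - C_op mu mus a n f x"
        using L_add[OF x n continuous_on_const continuous_on_mult[OF continuous_on_const f], of "f x" "-1"]
          L_const[OF x n, of "f x"] L_cmul[OF x, of n "-1" f] by simp
      show "dist (C_op mu mus a n f x) (f x) < e"
        using up lo e1 e2 LR bound unfolding dist_real_def by linarith
    qed
  qed
qed

end
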